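(* Let $(V,E)$ be a finite graph and $p\in[0,1]$. Define rates on $\{0,1\}^E\times\{-1,1\}^V$ as follows: if there exists $x\in V$ such that $\sigma'=\sigma^x$ and $\eta'(e)=\eta(e)$ for all $e\in E\setminus E_x$, then $$c((\eta,\sigma),(\eta',\sigma'))=(1-p)^{|\{e\in E_x:\eta'(e)=0\}|}\,p^{|\{e\in E_x:\eta'(e)=1\}|}\,\mathbf 1_{(\eta',\sigma')\in\mathcal C_x};$$ otherwise, for $(\eta,\sigma)\neq(\eta',\sigma')$, the rate is $0$; and $c((\eta,\sigma),(\eta,\sigma))=-\sum_{(\eta',\sigma')\ne(\eta,\sigma)}c((\eta,\sigma),(\eta',\sigma'))$. Then these rates satisfy the detailed balance equation $IP(\eta,\sigma)c((\eta,\sigma),(\eta',\sigma'))=IP(\eta',\sigma')c((\eta',\sigma'),(\eta,\sigma))$ for all pairs of states.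
   Context: Edge configurations $\eta\in\{0,1\}^E$, spin configurations $\sigma\in\{-1,1\}^V$. For $e=\langle x,y\rangle$, $\delta_\sigma(e)=\mathbf 1_{\sigma(x)=\sigma(y)}$. $IP(\eta,\sigma)=\frac1Z\prod_{e\in E}\big(p\mathbf 1_{\eta(e)=1}\delta_\sigma(e)+(1-p)\mathbf 1_{\eta(e)=0}\big)$ with $Z$ the normalizing constant. $E_x$ is the set of edges with endvertex $x$; $\sigma^x$ is $\sigma$ with the spin at $x$ flipped. $\mathcal C_x=\{(\eta,\sigma):\eta(e)\le\delta_\sigma(e)\text{ for all }e\in E_x\}$. *)

theory Defs
  imports Complex_Main
begin

text \<open>A finite (multi)graph: vertex set V, edge set E, and an endpoint map
  ends assigning to each edge its pair of endvertices.\<close>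

definition states :: "'v set \<Rightarrow> 'e set \<Rightarrow> (('e \<Rightarrow> nat) \<times> ('v \<Rightarrow> int)) set" where
  "states V E = {(eta, sigma).
      (\<forall>e. if e \<in> E then eta e \<in> {0, 1} else eta e = 0) \<and>
      (\<forall>v. if v \<in> V then sigma v \<in> {-1, 1} else sigma v = 1)}"

definition delta :: "('e \<Rightarrow> 'v \<times> 'v) \<Rightarrow> ('v \<Rightarrow> int) \<Rightarrow> 'e \<Rightarrow> nat" where
  "delta ends sigma e = (if sigma (fst (ends e)) = sigma (snd (ends e)) then 1 else 0)"

definition weight :: "'e set \<Rightarrow> ('e \<Rightarrow> 'v \<times> 'v) \<Rightarrow> real \<Rightarrow> ('e \<Rightarrow> nat) \<times> ('v \<Rightarrow> int) \<Rightarrow> real" where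
  "weight E ends p s = (case s of (eta, sigma) \<Rightarrow>
     (\<Prod>e\<in>E. p * (if eta e = 1 then real (delta ends sigma e) else 0)
              + (1 - p) * (if eta e = 0 then 1 else 0)))"

definition IP :: "'v set \<Rightarrow> 'e set \<Rightarrow> ('e \<Rightarrow> 'v \<times> 'v) \<Rightarrow> real \<Rightarrow> ('e \<Rightarrow> nat) \<times> ('v \<Rightarrow> int) \<Rightarrow> real" where
  "IP V E ends p s = weight E ends p s / (\<Sum>t\<in>states V E. weight E ends p t)"

definition edges_at :: "'e set \<Rightarrow> ('e \<Rightarrow> 'v \<times> 'v) \<Rightarrow> 'v \<Rightarrow> 'e set" where
  "edges_at E ends x = {e \<in> E. fst (ends e) = x \<or> snd (ends e) = x}"

definition flip :: "('v \<Rightarrow> int) \<Rightarrow> 'v \<Rightarrow> ('v \<Rightarrow> int)" where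
  "flip sigma x = sigma(x := - sigma x)"

definition Cx :: "'e set \<Rightarrow> ('e \<Rightarrow> 'v \<times> 'v) \<Rightarrow> 'v \<Rightarrow> (('e \<Rightarrow> nat) \<times> ('v \<Rightarrow> int)) set" where
  "Cx E ends x = {(eta, sigma). \<forall>e\<in>edges_at E ends x. eta e \<le> delta ends sigma e}"

definition update_at :: "'e set \<Rightarrow> ('e \<Rightarrow> 'v \<times> 'v) \<Rightarrow> 'v
    \<Rightarrow> ('e \<Rightarrow> nat) \<times> ('v \<Rightarrow> int) \<Rightarrow> ('e \<Rightarrow> nat) \<times> ('v \<Rightarrow> int) \<Rightarrow> bool" where
  "update_at E ends x s s' \<longleftrightarrow>
     snd s' = flip (snd s) x \<and> (\<forall>e\<in>E - edges_at E ends x. fst s' e = fst s e)"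

definition offrate :: "'v set \<Rightarrow> 'e set \<Rightarrow> ('e \<Rightarrow> 'v \<times> 'v) \<Rightarrow> real
    \<Rightarrow> ('e \<Rightarrow> nat) \<times> ('v \<Rightarrow> int) \<Rightarrow> ('e \<Rightarrow> nat) \<times> ('v \<Rightarrow> int) \<Rightarrow> real" where
  "offrate V E ends p s s' =
     (if \<exists>x\<in>V. update_at E ends x s s' then
        (let x = (SOME x. x \<in> V \<and> update_at E ends x s s') in
           (1 - p) ^ card {e \<in> edges_at E ends x. fst s' e = 0}
           * p ^ card {e \<in> edges_at E ends x. fst s' e = 1}
           * (if s' \<in> Cx E ends x then 1 else 0))
      else 0)"

definition rate :: "'v set \<Rightarrow> 'e set \<Rightarrow> ('e \<Rightarrow> 'v \<times> 'v) \<Rightarrow> real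
    \<Rightarrow> ('e \<Rightarrow> nat) \<times> ('v \<Rightarrow> int) \<Rightarrow> ('e \<Rightarrow> nat) \<times> ('v \<Rightarrow> int) \<Rightarrow> real" where
  "rate V E ends p s s' =
     (if s' = s then - (\<Sum>t\<in>states V E - {s}. offrate V E ends p s t)
      else offrate V E ends p s s')"

end

theory Submission
  imports Defs
begin

definition fac :: "('e \<Rightarrow> 'v \<times> 'v) \<Rightarrow> real \<Rightarrow> ('e \<Rightarrow> nat) \<times> ('v \<Rightarrow> int) \<Rightarrow> 'e \<Rightarrow> real" where
  "fac ends p s e = p * (if fst s e = 1 then real (delta ends (snd s) e) else 0)
              + (1 - p) * (if fst s e = 0 then 1 else 0)"

lemma weight_split:
  assumes "finite E"
  shows "weight E ends p s = (\<Prod>e\<in>E - edges_at E ends x. fac ends p s e) * (\<Prod>e\<in>edges_at E ends x. fac ends p s e)"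
proof -
  have "weight E ends p s = (\<Prod>e\<in>E. fac ends p s e)"
    by (cases s) (auto simp: weight_def fac_def intro!: prod.cong)
  also have "\<dots> = (\<Prod>e\<in>E - edges_at E ends x. fac ends p s e) * (\<Prod>e\<in>edges_at E ends x. fac ends p s e)"
    by (rule prod.subset_diff) (auto simp: edges_at_def assms)
  finally show ?thesis .
qed

lemma outer_eq:
  assumes "update_at E ends x s s'"
  shows "(\<Prod>e\<in>E - edges_at E ends x. fac ends p s e) = (\<Prod>e\<in>E - edges_at E ends x. fac ends p s' e)"
proof (rule prod.cong[OF refl])
  fix e assume e: "e \<in> E - edges_at E ends x"
  then have "fst (ends e) \<noteq> x" "snd (ends e) \<noteq> x" by (auto simp: edges_at_def)
  then have "delta ends (snd s') e = delta ends (snd s) e"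
    using assms by (simp add: update_at_def delta_def flip_def)
  moreover have "fst s' e = fst s e" using assms e by (simp add: update_at_def)
  ultimately show "fac ends p s e = fac ends p s' e" by (simp add: fac_def)
qed

lemma inner_eq:
  assumes "finite E" "s \<in> states V E"
  shows "(\<Prod>e\<in>edges_at E ends x. fac ends p s e) =
     (1 - p) ^ card {e \<in> edges_at E ends x. fst s e = 0}
           * p ^ card {e \<in> edges_at E ends x. fst s e = 1}
           * (if s \<in> Cx E ends x then 1 else 0)"
proof (cases "s \<in> Cx E ends x")
  case True
  have st: "\<And>e. e \<in> E \<Longrightarrow> fst s e \<in> {0,1}" using assms(2)
    by (cases s) (auto simp: states_def split: if_splits)
  have fin: "finite (edges_at E ends x)" using assms(1) by (simp add: edges_at_def)
  have "(\<Prod>e\<in>edges_at E ends x. fac ends p s e) = (\<Prod>e\<in>edges_at E ends x. if fst s e = 0 then 1 - p else p)"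
  proof (rule prod.cong[OF refl])
    fix e assume e: "e \<in> edges_at E ends x"
    then have "fst s e \<le> delta ends (snd s) e" using True by (cases s) (auto simp: Cx_def)
    moreover have "fst s e \<in> {0,1}" using st e by (auto simp: edges_at_def)
    moreover have "delta ends (snd s) e \<le> 1" by (simp add: delta_def)
    ultimately show "fac ends p s e = (if fst s e = 0 then 1 - p else p)"
      by (auto simp: fac_def)
  qed
  also have "\<dots> = (\<Prod>e\<in>edges_at E ends x \<inter> {e. fst s e = 0}. 1 - p) * (\<Prod>e\<in>edges_at E ends x - {e. fst s e = 0}. p)"
    using prod.If_cases[OF fin, of "\<lambda>e. fst s e = 0" "\<lambda>_. 1 - p" "\<lambda>_. p"]
    by (simp add: Diff_eq)
  also have "edges_at E ends x \<inter> {e. fst s e = 0} = {e \<in> edges_at E ends x. fst s e = 0}" by auto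
  also have "edges_at E ends x - {e. fst s e = 0} = {e \<in> edges_at E ends x. fst s e = 1}"
    using st by (auto simp: edges_at_def) (metis less_irrefl)+
  finally show ?thesis using True by simp
next
  case False
  then obtain e where e: "e \<in> edges_at E ends x" "fst s e > delta ends (snd s) e"
    by (cases s) (auto simp: Cx_def not_le)
  have fin: "finite (edges_at E ends x)" using assms(1) by (simp add: edges_at_def)
  have "fst s e \<in> {0,1}" using assms(2) e(1)
    by (cases s) (auto simp: states_def edges_at_def split: if_splits)
  then have "fac ends p s e = 0" using e(2) by (auto simp: fac_def delta_def split: if_splits)
  then have "(\<Prod>e\<in>edges_at E ends x. fac ends p s e) = 0"
    using fin e(1) by (rule_tac prod_zero) auto
  then show ?thesis using False by simp
qed

lemma update_sym: "update_at E ends x s s' \<Longrightarrow> update_at E ends x s' s"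
  by (auto simp: update_at_def flip_def)

lemma update_uniq:
  assumes "s \<in> states V E" "x \<in> V" "y \<in> V" "update_at E ends x s s'" "update_at E ends y s s'"
  shows "x = y"
proof (rule ccontr)
  assume ne: "x \<noteq> y"
  have "flip (snd s) x x = flip (snd s) y x" using assms(4,5) by (simp add: update_at_def)
  then have "snd s x = 0" using ne by (simp add: flip_def)
  moreover have "\<forall>v. if v \<in> V then snd s v \<in> {-1,1} else snd s v = 1" using assms(1)
    by (cases s) (simp only: states_def mem_Collect_eq case_prod_conv snd_conv, blast)
  then have "snd s x \<in> {-1,1}" using assms(2) by metis
  ultimately show False by simp
qed

lemma offrate_val:
  assumes "s \<in> states V E" "x \<in> V" "update_at E ends x s s'"
  shows "offrate V E ends p s s' = (1 - p) ^ card {e \<in> edges_at E ends x. fst s' e = 0}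
           * p ^ card {e \<in> edges_at E ends x. fst s' e = 1}
           * (if s' \<in> Cx E ends x then 1 else 0)"
proof -
  have "(SOME x. x \<in> V \<and> update_at E ends x s s') = x"
    using assms update_uniq[OF assms(1)] by (metis (mono_tags, lifting) someI_ex)
  then show ?thesis using assms unfolding offrate_def by auto
qed

theorem proposition4:
  fixes V :: "'v set" and E :: "'e set" and ends :: "'e \<Rightarrow> 'v \<times> 'v" and p :: real
  assumes "finite V" and "finite E"
    and "\<forall>e\<in>E. fst (ends e) \<in> V \<and> snd (ends e) \<in> V"
    and "0 \<le> p" and "p \<le> 1"
    and "s \<in> states V E" and "s' \<in> states V E"
  shows "IP V E ends p s * rate V E ends p s s' = IP V E ends p s' * rate V E ends p s' s"
proof (cases "s = s'")
  case True then show ?thesis by simp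
next
  case ne: False
  have r1: "rate V E ends p s s' = offrate V E ends p s s'" using ne by (simp add: rate_def)
  have r2: "rate V E ends p s' s = offrate V E ends p s' s" using ne by (simp add: rate_def)
  show ?thesis
  proof (cases "\<exists>x\<in>V. update_at E ends x s s'")
    case False
    then have "\<not> (\<exists>x\<in>V. update_at E ends x s' s)" using update_sym by meson
    then show ?thesis using False r1 r2 by (simp add: offrate_def)
  next
    case True
    then obtain x where x: "x \<in> V" "update_at E ends x s s'" by blast
    have x': "update_at E ends x s' s" using update_sym[OF x(2)] .
    define G where "G t = (\<Prod>e\<in>edges_at E ends x. fac ends p t e)" for t
    define B where "B = (\<Prod>e\<in>E - edges_at E ends x. fac ends p s e)"
    have o1: "offrate V E ends p s s' = G s'"
      unfolding G_def using offrate_val[OF assms(6) x] inner_eq[OF assms(2,7)] by simp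
    have o2: "offrate V E ends p s' s = G s"
      unfolding G_def using offrate_val[OF assms(7) x(1) x'] inner_eq[OF assms(2,6)] by simp
    have w1: "weight E ends p s = B * G s"
      unfolding B_def G_def by (rule weight_split[OF assms(2)])
    have w2: "weight E ends p s' = B * G s'"
      unfolding B_def G_def using weight_split[OF assms(2)] outer_eq[OF x(2)] by metis
    show ?thesis unfolding r1 r2 o1 o2 IP_def w1 w2 by simp
  qed
qed

end
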